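(* Let $A$ be a finite group acting by automorphisms on a finite group $G$ such that $\Gamma(G,A)$ contains no triangle. Then for every nonidentity element $x\in G$ there is a prime $p$ such that the order of $x$ divides $p^2$.
   Context: $\Gamma(G,A)$ is the simple graph whose vertices are the $A$-orbits $x^A$ with $x\in G\setminus\{1\}$, two distinct vertices $\mathcal{O},\mathcal{O}'$ being adjacent iff there exist $x\in\mathcal{O}$, $y\in\mathcal{O}'$ with $xy=yx$. A triangle is a set of three distinct pairwise adjacent vertices. *)

theory Defs
  imports "HOL-Algebra.Algebra"
begin

definition acts_by_automorphisms ::
  "('b, 'c) monoid_scheme \<Rightarrow> ('a, 'd) monoid_scheme \<Rightarrow> ('b \<Rightarrow> 'a \<Rightarrow> 'a) \<Rightarrow> bool" where
  "acts_by_automorphisms A G phi \<longleftrightarrow> group A \<and> group G \<and> phi \<in> hom A (AutoGroup G)"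

definition A_orbit ::
  "('b, 'c) monoid_scheme \<Rightarrow> ('b \<Rightarrow> 'a \<Rightarrow> 'a) \<Rightarrow> 'a \<Rightarrow> 'a set" where
  "A_orbit A phi x = {phi a x | a. a \<in> carrier A}"

definition Gamma_vertices ::
  "('a, 'd) monoid_scheme \<Rightarrow> ('b, 'c) monoid_scheme \<Rightarrow> ('b \<Rightarrow> 'a \<Rightarrow> 'a) \<Rightarrow> 'a set set" where
  "Gamma_vertices G A phi = {A_orbit A phi x | x. x \<in> carrier G \<and> x \<noteq> \<one>\<^bsub>G\<^esub>}"

definition Gamma_adj ::
  "('a, 'd) monoid_scheme \<Rightarrow> ('b, 'c) monoid_scheme \<Rightarrow> ('b \<Rightarrow> 'a \<Rightarrow> 'a) \<Rightarrow> 'a set \<Rightarrow> 'a set \<Rightarrow> bool" where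
  "Gamma_adj G A phi O1 O2 \<longleftrightarrow>
     O1 \<in> Gamma_vertices G A phi \<and> O2 \<in> Gamma_vertices G A phi \<and> O1 \<noteq> O2 \<and>
     (\<exists>x\<in>O1. \<exists>y\<in>O2. x \<otimes>\<^bsub>G\<^esub> y = y \<otimes>\<^bsub>G\<^esub> x)"

definition Gamma_has_triangle ::
  "('a, 'd) monoid_scheme \<Rightarrow> ('b, 'c) monoid_scheme \<Rightarrow> ('b \<Rightarrow> 'a \<Rightarrow> 'a) \<Rightarrow> bool" where
  "Gamma_has_triangle G A phi \<longleftrightarrow>
     (\<exists>O1 O2 O3. O1 \<noteq> O2 \<and> O1 \<noteq> O3 \<and> O2 \<noteq> O3 \<and>
        Gamma_adj G A phi O1 O2 \<and> Gamma_adj G A phi O1 O3 \<and> Gamma_adj G A phi O2 O3)"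

end

theory Submission
  imports Defs
begin

lemma auto_ord:
  fixes G (structure)
  assumes "group G" "f \<in> auto G" "y \<in> carrier G"
  shows "group.ord G (f y) = group.ord G y"
proof -
  interpret group G by fact
  have hom: "f \<in> hom G G" and bij: "bij_betw f (carrier G) (carrier G)"
    using assms(2) by (auto simp: auto_def Bij_def)
  have fy: "f y \<in> carrier G" using bij assms(3) by (auto simp: bij_betw_def)
  have inj: "inj_on f (carrier G)" using bij by (auto simp: bij_betw_def)
  have "\<And>n::nat. (f y) [^] n = \<one> \<longleftrightarrow> y [^] n = \<one>"
  proof -
    fix n :: nat
    have "(f y) [^] n = f (y [^] n)" using hom_nat_pow[OF hom assms(3)] assms(1) by simp
    moreover have "f \<one> = \<one>" using hom_one[OF hom] assms(1) by simp
    ultimately show "(f y) [^] n = \<one> \<longleftrightarrow> y [^] n = \<one>"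
      using inj assms(3) by (metis inj_on_eq_iff nat_pow_closed one_closed)
  qed
  then show ?thesis using fy assms(3) by (metis pow_eq_id ord_unique)
qed

lemma three_divisors:
  fixes n :: nat
  assumes "n > 1" "\<not> (\<exists>p::nat. Factorial_Ring.prime p \<and> n dvd p ^ 2)"
  shows "\<exists>p m. p dvd n \<and> m dvd n \<and> p > 1 \<and> m > 1 \<and> p \<noteq> m \<and> p \<noteq> n \<and> m \<noteq> n"
proof -
  obtain p where p: "Factorial_Ring.prime p" "p dvd n" using assms(1) prime_factor_nat by (metis less_irrefl)
  define m where "m = n div p"
  have p1: "p > 1" using p prime_gt_1_nat by blast
  have nm: "n = p * m" using p m_def by simp
  have "p \<noteq> n" proof
    assume "p = n"
    hence "n dvd p ^ 2" by (simp add: power2_eq_square)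
    thus False using assms(2) p by blast
  qed
  hence m1: "m > 1" using nm assms(1) by (cases "m = 0"; cases "m = 1") auto
  have "p \<noteq> m" proof
    assume "p = m"
    hence "n dvd p ^ 2" using nm by (simp add: power2_eq_square)
    thus False using assms(2) p by blast
  qed
  moreover have "m \<noteq> n" using nm p1 m1 by simp
  ultimately show ?thesis using p p1 m1 nm \<open>p \<noteq> n\<close> by (intro exI[of _ p] exI[of _ m]) auto
qed

theorem lemma5p1:
  fixes G :: "('a, 'd) monoid_scheme" and A :: "('b, 'c) monoid_scheme"
    and phi :: "'b \<Rightarrow> 'a \<Rightarrow> 'a"
  assumes "group G" and "finite (carrier G)"
    and "group A" and "finite (carrier A)"
    and "acts_by_automorphisms A G phi"
    and "\<not> Gamma_has_triangle G A phi"
    and "x \<in> carrier G" and "x \<noteq> \<one>\<^bsub>G\<^esub>"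
  shows "\<exists>p::nat. Factorial_Ring.prime p \<and> group.ord G x dvd p ^ 2"
proof (rule ccontr)
  assume neg: "\<not> ?thesis"
  interpret G: group G by fact
  interpret A: group A by fact
  have phihom: "phi \<in> hom A (AutoGroup G)" using assms(5) by (simp add: acts_by_automorphisms_def)
  have phiauto: "\<And>a. a \<in> carrier A \<Longrightarrow> phi a \<in> auto G"
    using phihom by (auto simp: hom_def AutoGroup_def)
  have phi1: "\<And>y. y \<in> carrier G \<Longrightarrow> phi \<one>\<^bsub>A\<^esub> y = y"
  proof -
    fix y assume y: "y \<in> carrier G"
    have "phi \<one>\<^bsub>A\<^esub> = \<one>\<^bsub>AutoGroup G\<^esub>"
      using hom_one[OF phihom assms(3) G.AutoGroup] .
    then show "phi \<one>\<^bsub>A\<^esub> y = y" using y by (simp add: AutoGroup_def BijGroup_def)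
  qed
  define n where "n = G.ord x"
  have n1: "n > 1" using G.ord_ge_1[OF assms(2,7)] G.ord_eq_1[OF assms(7)] assms(8) n_def by linarith
  obtain p m where pm: "p dvd n" "m dvd n" "p > 1" "m > 1" "p \<noteq> m" "p \<noteq> n" "m \<noteq> n"
    using three_divisors[OF n1] neg n_def by blast
  define y where "y = (\<lambda>d. x [^]\<^bsub>G\<^esub> (n div d))"
  have ycar: "\<And>d. y d \<in> carrier G" using assms(7) y_def by simp
  have yord: "\<And>d. d dvd n \<Longrightarrow> G.ord (y d) = d"
  proof -
    fix d assume d: "d dvd n"
    have "n div d dvd n" using dvd_mult_div_cancel[OF d] by (metis dvd_triv_right)
    moreover have "n div d \<noteq> 0" using d n1 by (simp add: dvd_div_eq_0_iff)
    ultimately have "G.ord (y d) = n div (n div d)" using G.ord_pow[OF assms(7)] y_def n_def by simp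
    moreover have "n div (n div d) = d"
    proof -
      obtain k where k: "n = d * k" using d by (auto elim!: dvdE)
      have "k > 0" "d > 0" using k n1 by (auto intro: gr0I)
      thus ?thesis using k by simp
    qed
    ultimately show "G.ord (y d) = d" by simp
  qed
  define Orb where "Orb = (\<lambda>d. A_orbit A phi (y d))"
  have yin: "\<And>d. y d \<in> Orb d"
  proof -
    fix d
    have "phi \<one>\<^bsub>A\<^esub> (y d) = y d" by (rule phi1[OF ycar])
    then show "y d \<in> Orb d" unfolding Orb_def A_orbit_def using A.one_closed by (metis (mono_tags, lifting) CollectI)
  qed
  have Oord: "\<And>d z. d dvd n \<Longrightarrow> z \<in> Orb d \<Longrightarrow> G.ord z = d"
  proof -
    fix d z assume d: "d dvd n" and z: "z \<in> Orb d"
    then obtain a where a: "a \<in> carrier A" "z = phi a (y d)" unfolding Orb_def A_orbit_def by blast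
    have "G.ord z = G.ord (y d)" using auto_ord[OF assms(1) phiauto[OF a(1)] ycar] a(2) by simp
    then show "G.ord z = d" using yord[OF d] by simp
  qed
  have vert: "\<And>d. d dvd n \<Longrightarrow> d > 1 \<Longrightarrow> Orb d \<in> Gamma_vertices G A phi"
  proof -
    fix d assume "d dvd n" "d > 1"
    hence "y d \<noteq> \<one>\<^bsub>G\<^esub>" using yord G.ord_eq_1[OF ycar] by fastforce
    then show "Orb d \<in> Gamma_vertices G A phi" unfolding Gamma_vertices_def Orb_def using ycar by blast
  qed
  have comm: "\<And>d e. y d \<otimes>\<^bsub>G\<^esub> y e = y e \<otimes>\<^bsub>G\<^esub> y d"
    unfolding y_def using assms(7) by (simp add: G.nat_pow_mult add.commute)
  have dist: "\<And>d e. d dvd n \<Longrightarrow> e dvd n \<Longrightarrow> d \<noteq> e \<Longrightarrow> Orb d \<noteq> Orb e"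
  proof -
    fix d e assume de: "d dvd n" "e dvd n" "d \<noteq> e"
    show "Orb d \<noteq> Orb e"
    proof
      assume "Orb d = Orb e"
      hence "y d \<in> Orb e" using yin[of d] by simp
      hence "G.ord (y d) = e" using Oord de by blast
      thus False using yord de by simp
    qed
  qed
  have adj: "\<And>d e. d dvd n \<Longrightarrow> e dvd n \<Longrightarrow> d > 1 \<Longrightarrow> e > 1 \<Longrightarrow> d \<noteq> e \<Longrightarrow> Gamma_adj G A phi (Orb d) (Orb e)"
  proof -
    fix d e assume h: "d dvd n" "e dvd n" "d > 1" "e > 1" "d \<noteq> e"
    have "\<exists>u\<in>Orb d. \<exists>v\<in>Orb e. u \<otimes>\<^bsub>G\<^esub> v = v \<otimes>\<^bsub>G\<^esub> u"
      using yin[of d] yin[of e] comm[of d e] by blast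
    then show "Gamma_adj G A phi (Orb d) (Orb e)"
      unfolding Gamma_adj_def using vert[OF h(1,3)] vert[OF h(2,4)] dist[OF h(1,2,5)] by blast
  qed
  have "Gamma_has_triangle G A phi"
    unfolding Gamma_has_triangle_def
  proof (intro exI conjI)
    show "Orb p \<noteq> Orb m" using dist pm by simp
    show "Orb p \<noteq> Orb n" using dist pm by simp
    show "Orb m \<noteq> Orb n" using dist pm by simp
    show "Gamma_adj G A phi (Orb p) (Orb m)" using adj pm by simp
    show "Gamma_adj G A phi (Orb p) (Orb n)" using adj pm n1 by simp
    show "Gamma_adj G A phi (Orb m) (Orb n)" using adj pm n1 by simp
  qed
  with assms(6) show False by contradiction
qed

end
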